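(* Let $(x_1,y_1),\dots,(x_n,y_n)$ be points in $\mathbb{R}^2$, let $z_i=x_i^2+y_i^2$, and for any expressions $u,v$ write $M_u=\sum_{i=1}^n u_i$ and $M_{uv}=\sum_{i=1}^n u_iv_i$ (e.g. $M_{xz}=\sum_i x_iz_i$, $M_{zz}=\sum_i z_i^2$, $M_x=\sum_i x_i$). Define the symmetric $4\times 4$ matrices $$ \mathbf{M}=\begin{pmatrix} M_{zz} & M_{xz} & M_{yz} & M_z\\ M_{xz} & M_{xx} & M_{xy} & M_x\\ M_{yz} & M_{xy} & M_{yy} & M_y\\ M_z & M_x & M_y & n \end{pmatrix},\qquad \mathbf{B}=\begin{pmatrix} 0&0&0&-2\\ 0&1&0&0\\ 0&0&1&0\\ -2&0&0&0 \end{pmatrix}, $$ and the quartic polynomial $Q_4(\eta)=\det(\mathbf{M}-\eta\mathbf{B})$. Let $\eta_\ast=\min\{\eta\ge 0:\ Q_4(\eta)=0\}$ be the first nonnegative root of $Q_4$. Then $Q_4$ is decreasing and concave up on the interval between $\eta=0$ and $\eta_\ast$. Consequently, Newton's method applied to the equation $Q_4(\eta)=0$ with starting point $\eta=0$ always converges to $\eta_\ast$.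
   Context: This arises in Pratt's algebraic circle fit: one minimizes $\sum_{i=1}^n (Az_i+Bx_i+Cy_i+D)^2=\mathbf{A}^T\mathbf{M}\mathbf{A}$ over $\mathbf{A}=(A,B,C,D)^T$ subject to $B^2+C^2-4AD=\mathbf{A}^T\mathbf{B}\mathbf{A}=1$, and the minimum value equals the smallest nonnegative generalized eigenvalue $\eta_\ast$ of the pair $(\mathbf{M},\mathbf{B})$. *)

theory Defs
  imports "HOL-Analysis.Analysis"
begin

definition pratt_M :: "nat \<Rightarrow> (nat \<Rightarrow> real) \<Rightarrow> (nat \<Rightarrow> real) \<Rightarrow> real^4^4" where
  "pratt_M n x y =
    (let z = (\<lambda>i. (x i)\<^sup>2 + (y i)\<^sup>2);
         Mzz = (\<Sum>i<n. z i * z i); Mxz = (\<Sum>i<n. x i * z i); Myz = (\<Sum>i<n. y i * z i);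
         Mz = (\<Sum>i<n. z i); Mxx = (\<Sum>i<n. x i * x i); Mxy = (\<Sum>i<n. x i * y i);
         Mx = (\<Sum>i<n. x i); Myy = (\<Sum>i<n. y i * y i); My = (\<Sum>i<n. y i)
     in vector [vector [Mzz, Mxz, Myz, Mz],
                vector [Mxz, Mxx, Mxy, Mx],
                vector [Myz, Mxy, Myy, My],
                vector [Mz,  Mx,  My,  real n]])"

definition pratt_B :: "real^4^4" where
  "pratt_B = vector [vector [0, 0, 0, -2],
                     vector [0, 1, 0, 0],
                     vector [0, 0, 1, 0],
                     vector [-2, 0, 0, 0]]"

definition pratt_Q4 :: "nat \<Rightarrow> (nat \<Rightarrow> real) \<Rightarrow> (nat \<Rightarrow> real) \<Rightarrow> real \<Rightarrow> real" where
  "pratt_Q4 n x y \<eta> = det (pratt_M n x y - \<eta> *\<^sub>R pratt_B)"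

definition pratt_eta_star :: "nat \<Rightarrow> (nat \<Rightarrow> real) \<Rightarrow> (nat \<Rightarrow> real) \<Rightarrow> real" where
  "pratt_eta_star n x y = Inf {\<eta>. \<eta> \<ge> 0 \<and> pratt_Q4 n x y \<eta> = 0}"

fun newton_iter :: "(real \<Rightarrow> real) \<Rightarrow> real \<Rightarrow> nat \<Rightarrow> real" where
  "newton_iter f x0 0 = x0"
| "newton_iter f x0 (Suc k) =
     (let e = newton_iter f x0 k in e - f e / deriv f e)"

end

theory Submission
  imports Defs
begin
lemma det_4':
  "det (A::'a::comm_ring_1^4^4) =
  A$1$1*A$2$2*A$3$3*A$4$4 - A$1$1*A$2$2*A$3$4*A$4$3 - A$1$1*A$2$3*A$3$2*A$4$4 + A$1$1*A$2$3*A$3$4*A$4$2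
 + A$1$1*A$2$4*A$3$2*A$4$3 - A$1$1*A$2$4*A$3$3*A$4$2
 - A$1$2*A$2$1*A$3$3*A$4$4 + A$1$2*A$2$1*A$3$4*A$4$3 + A$1$2*A$2$3*A$3$1*A$4$4 - A$1$2*A$2$3*A$3$4*A$4$1
 - A$1$2*A$2$4*A$3$1*A$4$3 + A$1$2*A$2$4*A$3$3*A$4$1
 + A$1$3*A$2$1*A$3$2*A$4$4 - A$1$3*A$2$1*A$3$4*A$4$2 - A$1$3*A$2$2*A$3$1*A$4$4 + A$1$3*A$2$2*A$3$4*A$4$1
 + A$1$3*A$2$4*A$3$1*A$4$2 - A$1$3*A$2$4*A$3$2*A$4$1
 - A$1$4*A$2$1*A$3$2*A$4$3 + A$1$4*A$2$1*A$3$3*A$4$2 + A$1$4*A$2$2*A$3$1*A$4$3 - A$1$4*A$2$2*A$3$3*A$4$1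
 - A$1$4*A$2$3*A$3$1*A$4$2 + A$1$4*A$2$3*A$3$2*A$4$1"
proof -
  have f1: "finite {2::4, 3, 4}" "1 \<notin> {2::4, 3, 4}" by auto
  have f2: "finite {3::4, 4}" "2 \<notin> {3::4, 4}" by auto
  have f3: "finite {4::4}" "3 \<notin> {4::4}" by auto
  show ?thesis
    unfolding det_def UNIV_4
    unfolding sum_over_permutations_insert[OF f1]
    unfolding sum_over_permutations_insert[OF f2]
    unfolding sum_over_permutations_insert[OF f3]
    unfolding permutes_sing
    by (simp add: sign_swap_id permutation_swap_id sign_compose permutation_compose sign_id swap_id_eq algebra_simps)
qed


definition det4f :: "real \<Rightarrow> real \<Rightarrow> real \<Rightarrow> real \<Rightarrow> real \<Rightarrow> real \<Rightarrow> real \<Rightarrow> real \<Rightarrow> real \<Rightarrow> real \<Rightarrow> real \<Rightarrow> real \<Rightarrow> real \<Rightarrow> real \<Rightarrow> real \<Rightarrow> real \<Rightarrow> real" where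
 "det4f A11 A12 A13 A14 A21 A22 A23 A24 A31 A32 A33 A34 A41 A42 A43 A44 =
  A11*A22*A33*A44 - A11*A22*A34*A43 - A11*A23*A32*A44 + A11*A23*A34*A42
 + A11*A24*A32*A43 - A11*A24*A33*A42
 - A12*A21*A33*A44 + A12*A21*A34*A43 + A12*A23*A31*A44 - A12*A23*A34*A41
 - A12*A24*A31*A43 + A12*A24*A33*A41
 + A13*A21*A32*A44 - A13*A21*A34*A42 - A13*A22*A31*A44 + A13*A22*A34*A41
 + A13*A24*A31*A42 - A13*A24*A32*A41
 - A14*A21*A32*A43 + A14*A21*A33*A42 + A14*A22*A31*A43 - A14*A22*A33*A41
 - A14*A23*A31*A42 + A14*A23*A32*A41"

lemma key_identity:
 fixes N xb yb a u1 u2 p q r e :: real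
assumes "Mx = N*xb" "My = N*yb" "Mxx = p + N*xb^2" "Myy = q + N*yb^2" "Mxy = r + N*xb*yb"
 "Mz = (p+q) + N*(xb^2+yb^2)"
 "Mxz = u1 + 2*xb*p + 2*yb*r + xb*(p+q) + N*xb*(xb^2+yb^2)"
 "Myz = u2 + 2*yb*q + 2*xb*r + yb*(p+q) + N*yb*(xb^2+yb^2)"
 "Mzz = a + 4*xb^2*p + 4*yb^2*q + N*(xb^2+yb^2)^2 + 4*xb*u1 + 4*yb*u2 + 2*(xb^2+yb^2)*(p+q) + 8*xb*yb*r"
 shows "det4f Mzz Mxz Myz (Mz+2*e) Mxz (Mxx-e) Mxy Mx Myz Mxy (Myy-e) My (Mz+2*e) Mx My N
 = (N*a - ((p+q)+2*e)^2)*((p-e)*(q-e) - r^2) - N*(u1^2*(q-e) - 2*u1*u2*r + u2^2*(p-e))"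
  unfolding det4f_def assms by algebra



lemma vector_4:
  "(vector [a,b,c,d] ::('a::zero)^4)$1 = a"
  "(vector [a,b,c,d] ::('a::zero)^4)$2 = b"
  "(vector [a,b,c,d] ::('a::zero)^4)$3 = c"
  "(vector [a,b,c,d] ::('a::zero)^4)$4 = d"
  unfolding vector_def by simp_all

lemma det_4f: "det (A::real^4^4) = det4f (A$1$1) (A$1$2) (A$1$3) (A$1$4) (A$2$1) (A$2$2) (A$2$3) (A$2$4)
   (A$3$1) (A$3$2) (A$3$3) (A$3$4) (A$4$1) (A$4$2) (A$4$3) (A$4$4)"
  unfolding det_4' det4f_def by simp

lemma Q4_formula:
  fixes n :: nat and x y :: "nat \<Rightarrow> real"
  defines "z \<equiv> (\<lambda>i. (x i)\<^sup>2 + (y i)\<^sup>2)"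
  shows "pratt_Q4 n x y e = det4f (\<Sum>i<n. z i * z i) (\<Sum>i<n. x i * z i) (\<Sum>i<n. y i * z i) ((\<Sum>i<n. z i) + 2*e)
     (\<Sum>i<n. x i * z i) ((\<Sum>i<n. x i * x i) - e) (\<Sum>i<n. x i * y i) (\<Sum>i<n. x i)
     (\<Sum>i<n. y i * z i) (\<Sum>i<n. x i * y i) ((\<Sum>i<n. y i * y i) - e) (\<Sum>i<n. y i)
     ((\<Sum>i<n. z i) + 2*e) (\<Sum>i<n. x i) (\<Sum>i<n. y i) (real n)"
  unfolding pratt_Q4_def det_4f
  unfolding pratt_M_def pratt_B_def Let_def z_def
  by (simp add: vector_4 algebra_simps)


lemma bilin_sum:
  fixes f g h k :: "nat \<Rightarrow> real"
  shows "(\<Sum>i\<in>I. (al * f i + be * g i) * (ga * h i + de * k i)) =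
    al*ga*(\<Sum>i\<in>I. f i * h i) + al*de*(\<Sum>i\<in>I. f i * k i) + be*ga*(\<Sum>i\<in>I. g i * h i) + be*de*(\<Sum>i\<in>I. g i * k i)"
  by (simp add: algebra_simps sum.distrib sum_distrib_left)

lemma gram3:
  fixes f g h :: "nat \<Rightarrow> real" and I :: "nat set"
  defines "A \<equiv> (\<Sum>i\<in>I. f i ^ 2)" and "B \<equiv> (\<Sum>i\<in>I. g i ^ 2)" and "C \<equiv> (\<Sum>i\<in>I. h i ^ 2)"
    and "D \<equiv> (\<Sum>i\<in>I. f i * g i)" and "E \<equiv> (\<Sum>i\<in>I. f i * h i)" and "F \<equiv> (\<Sum>i\<in>I. g i * h i)"
  assumes fin: "finite I"
  shows "A*(B*C - F^2) - D*(D*C - F*E) + E*(D*F - B*E) \<ge> 0"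
proof (cases "B = 0")
  case True
  then have g0: "\<forall>i\<in>I. g i = 0" using fin unfolding B_def
    by (simp add: sum_nonneg_eq_0_iff)
  then have "D = 0" "F = 0" unfolding D_def F_def by simp_all
  then show ?thesis using True by simp
next
  case False
  have B0: "B > 0" using False unfolding B_def by (metis less_eq_real_def sum_nonneg zero_le_power2)
  define P where "P i = B * f i - D * g i" for i
  define R where "R i = B * h i - F * g i" for i
  have PP: "(\<Sum>i\<in>I. P i ^ 2) = B*(A*B - D^2)"
  proof -
    have "(\<Sum>i\<in>I. P i ^ 2) = (\<Sum>i\<in>I. (B * f i + (-D) * g i) * (B * f i + (-D) * g i))"
      unfolding P_def by (simp add: power2_eq_square)
    also have "\<dots> = B*B*A + B*(-D)*D + (-D)*B*D + (-D)*(-D)*B"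
      unfolding bilin_sum A_def B_def D_def by (simp add: power2_eq_square mult.commute)
    finally show ?thesis by (simp add: algebra_simps power2_eq_square)
  qed
  have RR: "(\<Sum>i\<in>I. R i ^ 2) = B*(B*C - F^2)"
  proof -
    have "(\<Sum>i\<in>I. R i ^ 2) = (\<Sum>i\<in>I. (B * h i + (-F) * g i) * (B * h i + (-F) * g i))"
      unfolding R_def by (simp add: power2_eq_square)
    also have "\<dots> = B*B*C + B*(-F)*F + (-F)*B*F + (-F)*(-F)*B"
      unfolding bilin_sum C_def B_def F_def by (simp add: power2_eq_square mult.commute)
    finally show ?thesis by (simp add: algebra_simps power2_eq_square)
  qed
  have PR: "(\<Sum>i\<in>I. P i * R i) = B*(B*E - D*F)"
  proof -
    have "(\<Sum>i\<in>I. P i * R i) = (\<Sum>i\<in>I. (B * f i + (-D) * g i) * (B * h i + (-F) * g i))"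
      unfolding P_def R_def by simp
    also have "\<dots> = B*B*E + B*(-F)*D + (-D)*B*F + (-D)*(-F)*B"
      unfolding bilin_sum E_def B_def D_def F_def by (simp add: power2_eq_square mult.commute)
    finally show ?thesis by (simp add: algebra_simps power2_eq_square)
  qed
  have cs: "(B*(B*E - D*F))^2 \<le> (B*(A*B - D^2)) * (B*(B*C - F^2))"
    using Cauchy_Schwarz_ineq_sum[of P R I] PP RR PR by simp
  have "B^2 * (B*E - D*F)^2 \<le> B^2 * ((A*B - D^2) * (B*C - F^2))"
  proof -
    have e1: "(B*(B*E - D*F))^2 = B^2*(B*E - D*F)^2" by (simp add: power_mult_distrib)
    have e2: "(B*(A*B - D^2)) * (B*(B*C - F^2)) = B^2 * ((A*B - D^2) * (B*C - F^2))"
      by (simp add: power2_eq_square)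
    show ?thesis using cs unfolding e1 e2 .
  qed
  then have cs2: "(B*E - D*F)^2 \<le> (A*B - D^2) * (B*C - F^2)"
    using B0 by (simp add: mult_le_cancel_left)
  have "B * (A*(B*C - F^2) - D*(D*C - F*E) + E*(D*F - B*E)) = (A*B - D^2) * (B*C - F^2) - (B*E - D*F)^2"
    by algebra
  then have "B * (A*(B*C - F^2) - D*(D*C - F*E) + E*(D*F - B*E)) \<ge> 0" using cs2 by simp
  then show ?thesis using B0 by (simp add: zero_le_mult_iff)
qed



lemma wform_nonneg:
  fixes P R r u1 u2 :: real
  assumes "P \<ge> 0" "R \<ge> 0" "r^2 \<le> P*R"
  shows "u1^2*R - 2*u1*u2*r + u2^2*P \<ge> 0"
proof (cases "R = 0")
  case True
  then have "r = 0" using assms by simp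
  then show ?thesis using True assms by simp
next
  case False
  then have R0: "R > 0" using assms by simp
  have "R * (u1^2*R - 2*u1*u2*r + u2^2*P) = (R*u1 - r*u2)^2 + (P*R - r^2)*u2^2"
    by algebra
  also have "\<dots> \<ge> 0" using assms by simp
  finally show ?thesis using R0 by (simp add: zero_le_mult_iff)
qed

lemma abstract_main:
  fixes Q :: "real \<Rightarrow> real" and N aa u1 u2 p q r :: real
  assumes Qdef: "\<And>e. Q e = (N*aa - (p+q+2*e)^2)*((p-e)*(q-e) - r^2) - N*(u1^2*(q-e) - 2*u1*u2*r + u2^2*(p-e))"
  and N: "N > 0" and p: "p \<ge> 0" and q: "q \<ge> 0" and pqr: "r^2 \<le> p*q" and Q0: "Q 0 > 0"
  defines "es \<equiv> Inf {e. e \<ge> 0 \<and> Q e = 0}"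
  shows "es \<ge> 0 \<and> Q es = 0 \<and> (\<forall>a b. 0 \<le> a \<and> a < b \<and> b \<le> es \<longrightarrow> Q b < Q a)
    \<and> convex_on {0..es} Q \<and> (newton_iter Q 0 \<longlonglongrightarrow> es)"
proof -
  define s where "s = p + q"
  define G where "G e = N*aa - (s+2*e)^2" for e
  define h where "h e = (p-e)*(q-e) - r^2" for e
  define w where "w e = u1^2*(q-e) - 2*u1*u2*r + u2^2*(p-e)" for e
  define Q1 where "Q1 e = -4*(s+2*e)*h e + G e*(2*e - s) + N*(u1^2+u2^2)" for e
  define Q2 where "Q2 e = 2*G e + 8*(s^2 - 4*e^2) - 8*h e" for e
  have Qf: "Q = (\<lambda>e. (N*aa - (s+2*e)^2)*((p-e)*(q-e) - r^2) - N*(u1^2*(q-e) - 2*u1*u2*r + u2^2*(p-e)))"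
    using Qdef s_def by (auto simp: fun_eq_iff)
  have QGhw: "Q e = G e * h e - N * w e" for e
    unfolding Qf G_def h_def w_def by simp
  have dQ: "(Q has_real_derivative Q1 e) (at e)" for e
  proof -
    have "((\<lambda>e. (N*aa - (s+2*e)^2)*((p-e)*(q-e) - r^2) - N*(u1^2*(q-e) - 2*u1*u2*r + u2^2*(p-e)))
       has_real_derivative Q1 e) (at e)"
      unfolding Q1_def G_def h_def s_def
      by (auto intro!: derivative_eq_intros simp: algebra_simps power2_eq_square)
    then show ?thesis unfolding Qf .
  qed
  have dQ1: "(Q1 has_real_derivative Q2 e) (at e)" for e
  proof -
    have "((\<lambda>e. -4*(s+2*e)*((p-e)*(q-e) - r^2) + (N*aa - (s+2*e)^2)*(2*e - s) + N*(u1^2+u2^2))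
       has_real_derivative Q2 e) (at e)"
      unfolding Q2_def G_def h_def s_def
      by (auto intro!: derivative_eq_intros simp: algebra_simps power2_eq_square)
    moreover have "Q1 = (\<lambda>e. -4*(s+2*e)*((p-e)*(q-e) - r^2) + (N*aa - (s+2*e)^2)*(2*e - s) + N*(u1^2+u2^2))"
      unfolding Q1_def G_def h_def by (simp add: fun_eq_iff)
    ultimately show ?thesis by simp
  qed
  have contQ: "isCont Q e" for e using dQ by (rule DERIV_isCont)
  have contQ1: "isCont Q1 e" for e using dQ1 by (rule DERIV_isCont)
  have contG: "isCont G e" for e unfolding G_def by (intro continuous_intros)
  (* the smaller root of h *)
  define D where "D = (p-q)^2 + 4*r^2"
  define t where "t = sqrt D"
  define l1 where "l1 = (s - t)/2"
  have D0: "D \<ge> 0" unfolding D_def by simp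
  have tt: "t^2 = D" unfolding t_def using D0 by (simp del: real_sqrt_pow2_iff add: real_sqrt_pow2)
  have t0: "t \<ge> 0" unfolding t_def using D0 by simp
  have s0: "s \<ge> 0" unfolding s_def using p q by simp
  have Ds: "D \<le> s^2" unfolding D_def s_def using pqr by (simp add: power2_eq_square algebra_simps)
  have ts: "t \<le> s"
  proof -
    have "t \<le> sqrt (s^2)" unfolding t_def using Ds by (rule real_sqrt_le_mono)
    then show ?thesis using s0 by simp
  qed
  have tpq: "\<bar>p - q\<bar> \<le> t"
  proof -
    have "sqrt ((p-q)^2) \<le> t" unfolding t_def D_def by (rule real_sqrt_le_mono) simp
    then show ?thesis by simp
  qed
  have l10: "l1 \<ge> 0" unfolding l1_def using ts by simp
  have l1p: "l1 \<le> p" and l1q: "l1 \<le> q" unfolding l1_def s_def using tpq by auto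
  have hfac: "h e = (e - l1) * (e - (s + t)/2)" for e
  proof -
    have "(e - l1) * (e - (s + t)/2) = e^2 - s*e + (s^2 - t^2)/4"
      unfolding l1_def by (simp add: field_simps power2_eq_square)
    also have "\<dots> = h e" unfolding tt D_def h_def s_def by (simp add: field_simps power2_eq_square)
    finally show ?thesis by simp
  qed
  have hnn: "h e \<ge> 0" if "e \<le> l1" for e
  proof -
    have "e - l1 \<le> 0" "e - (s + t)/2 \<le> 0" using that t0 unfolding l1_def by auto
    then show ?thesis unfolding hfac by (simp add: mult_nonpos_nonpos)
  qed
  have wnn: "w e \<ge> 0" if "e \<le> l1" for e
  proof -
    have "r^2 \<le> (p-e)*(q-e)" using hnn[OF that] unfolding h_def by simp
    then show ?thesis unfolding w_def
      using wform_nonneg[of "p-e" "q-e" r u1 u2] that l1p l1q by (simp add: algebra_simps)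
  qed
  have Ql1: "Q l1 \<le> 0"
  proof -
    have "h l1 = 0" unfolding hfac by simp
    then show ?thesis unfolding QGhw using wnn[of l1] N by simp
  qed
  obtain x0 where x0: "0 \<le> x0" "x0 \<le> l1" "Q x0 = 0"
    using IVT2[of Q l1 0 0] Ql1 Q0 l10 contQ by auto
  define S where "S = {e. e \<ge> 0 \<and> Q e = 0}"
  have Sne: "S \<noteq> {}" using x0 unfolding S_def by auto
  have Sbdd: "bdd_below S" unfolding S_def by (rule bdd_belowI[of _ 0]) auto
  have Scl: "closed S"
  proof -
    have "continuous_on UNIV Q" using contQ by (simp add: continuous_on_eq_continuous_at)
    then have "closed {e. Q e = 0}" by (simp add: closed_Collect_eq continuous_on_const)
    moreover have "closed {e::real. e \<ge> 0}" by (simp add: closed_Collect_le)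
    ultimately have "closed ({e::real. e \<ge> 0} \<inter> {e. Q e = 0})" by auto
    moreover have "S = {e::real. e \<ge> 0} \<inter> {e. Q e = 0}" unfolding S_def by auto
    ultimately show ?thesis by simp
  qed
  have esS: "es \<in> S" unfolding es_def S_def[symmetric] using closed_contains_Inf[OF Sne Sbdd Scl] .
  then have es0: "es \<ge> 0" and Qes: "Q es = 0" unfolding S_def by auto
  have "es \<le> x0" unfolding es_def S_def[symmetric] using x0 Sbdd by (intro cInf_lower) (auto simp: S_def)
  then have esl1: "es \<le> l1" using x0 by simp
  have espos: "es > 0" using es0 Qes Q0 by (cases "es = 0") auto
  have Qpos: "Q e > 0" if ee: "0 \<le> e" "e < es" for e
  proof (rule ccontr)
    assume "\<not> Q e > 0"
    then obtain x1 where "0 \<le> x1" "x1 \<le> e" "Q x1 = 0"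
      using IVT2[of Q e 0 0] Q0 ee contQ by auto
    then have "es \<le> x1" unfolding es_def S_def[symmetric] using Sbdd by (intro cInf_lower) (auto simp: S_def)
    then show False using \<open>x1 \<le> e\<close> that by simp
  qed
  have Gpos: "G e > 0" if "0 \<le> e" "e < es" for e
  proof (rule ccontr)
    assume "\<not> G e > 0"
    then have "G e * h e \<le> 0" using hnn[of e] that esl1 by (simp add: mult_nonpos_nonneg)
    moreover have "N * w e \<ge> 0" using wnn[of e] that esl1 N by simp
    ultimately have "Q e \<le> 0" unfolding QGhw by simp
    then show False using Qpos[OF that] by simp
  qed
  have Gnn: "G e \<ge> 0" if "0 \<le> e" "e \<le> es" for e
  proof (cases "e < es")
    case True then show ?thesis using Gpos that by fastforce
  next
    case False
    then have ee: "e = es" using that by simp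
    have lim: "(G \<longlongrightarrow> G es) (at_left es)"
      using contG[of es] unfolding isCont_def by (rule tendsto_mono[OF at_le, rotated]) simp
    have ev: "eventually (\<lambda>x. 0 \<le> G x) (at_left es)"
      using eventually_at_left_real[OF espos] by eventually_elim (auto intro: less_imp_le[OF Gpos])
    have "0 \<le> G es" by (rule tendsto_lowerbound[OF lim ev]) simp
    then show ?thesis using ee by simp
  qed
  have Q2nn: "Q2 e \<ge> 0" if "0 \<le> e" "e \<le> es" for e
  proof -
    have e2: "2*e \<le> s" using that esl1 l1p l1q s_def by simp
    have a1: "s*e \<ge> 2*e*e" using e2 that by (simp add: mult_right_mono)
    have a2: "s * s \<ge> (2*e)*(2*e)" using e2 that mult_mono[of "2*e" s "2*e" s] by simp
    have a3: "4*(p*q) \<le> s * s"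
    proof -
      have "s * s - 4*(p*q) = (p-q)^2" unfolding s_def by algebra
      then show ?thesis by (metis diff_ge_0_iff_ge zero_le_power2)
    qed
    have G0: "G e \<ge> 0" using Gnn that by simp
    have "Q2 e = 2*G e + 8*(s * s) - 40*(e*e) + 8*(s*e) - 8*(p*q) + 8*r^2"
      unfolding Q2_def h_def s_def by (simp add: algebra_simps power2_eq_square)
    moreover have "r^2 \<ge> 0" by simp
    ultimately show ?thesis using a1 a2 a3 G0 by linarith
  qed
  have convex: "convex_on {0..es} Q"
    by (rule f''_ge0_imp_convex[of _ _ Q1 Q2]) (use dQ dQ1 Q2nn in auto)
  have tangent: "Q1 x * (y - x) \<le> Q y - Q x" if "x \<in> {0..es}" "y \<in> {0..es}" for x y
    by (rule f''_imp_f'[of "{0..es}" Q Q1 Q2]) (use dQ dQ1 Q2nn that in auto)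
  have Q1neg: "Q1 e < 0" if "0 \<le> e" "e < es" for e
  proof -
    have "Q1 e * (es - e) \<le> Q es - Q e" using tangent[of e es] that by auto
    then have "Q1 e * (es - e) < 0" using Qpos[OF that] Qes by simp
    then show ?thesis using that by (simp add: mult_less_0_iff)
  qed
  have decr: "\<forall>a b. 0 \<le> a \<and> a < b \<and> b \<le> es \<longrightarrow> Q b < Q a"
  proof (intro allI impI)
    fix a b assume ab: "0 \<le> a \<and> a < b \<and> b \<le> es"
    obtain z where z: "a < z" "z < b" "Q b - Q a = (b - a) * Q1 z"
      using MVT2[of a b Q Q1] ab dQ by auto
    have "Q1 z < 0" using Q1neg[of z] z ab by simp
    then have "(b - a) * Q1 z < 0" using ab by (simp add: mult_pos_neg)
    then show "Q b < Q a" using z by simp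
  qed
  define F where "F e = e - Q e / Q1 e" for e
  have dQeq: "deriv Q e = Q1 e" for e using dQ by (rule DERIV_imp_deriv)
  have itS: "newton_iter Q 0 (Suc k) = F (newton_iter Q 0 k)" for k
    by (simp add: F_def dQeq Let_def)
  have Fstep: "0 \<le> F e \<and> F e \<le> es \<and> e \<le> F e" if "0 \<le> e" "e \<le> es" for e
  proof (cases "e = es")
    case True then show ?thesis using Qes that by (simp add: F_def)
  next
    case False
    then have lt: "e < es" using that by simp
    have Qp: "Q e > 0" and Q1n: "Q1 e < 0" using Qpos Q1neg that lt by auto
    have "Q e / Q1 e < 0" using Qp Q1n by (simp add: divide_pos_neg)
    then have ge: "e \<le> F e" unfolding F_def by simp
    have "Q1 e * (es - e) \<le> - Q e" using tangent[of e es] that Qes by auto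
    then have "(- Q e) / Q1 e \<le> es - e" using Q1n neg_divide_le_eq[OF Q1n, of "- Q e" "es - e"]
      by (simp add: mult.commute)
    moreover have "Q e / Q1 e = - ((- Q e) / Q1 e)" by simp
    ultimately have "F e \<le> es" unfolding F_def by linarith
    then show ?thesis using ge that by simp
  qed
  define it where "it = newton_iter Q 0"
  have itb: "0 \<le> it k \<and> it k \<le> es" for k
  proof (induction k)
    case 0 show ?case by (simp add: it_def es0)
  next
    case (Suc k)
    then show ?case unfolding it_def itS using Fstep[of "newton_iter Q 0 k"] by (simp add: it_def)
  qed
  have inc: "incseq it"
    unfolding incseq_Suc_iff it_def itS using itb Fstep unfolding it_def by blast
  have bdd: "bdd_above (range it)" using itb by (auto intro: bdd_aboveI[of _ es])
  define L where "L = (SUP k. it k)"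
  have lim: "it \<longlonglongrightarrow> L" unfolding L_def by (rule LIMSEQ_incseq_SUP[OF bdd inc])
  have Les: "L \<le> es" using lim itb by (intro LIMSEQ_le_const2) auto
  have L0: "0 \<le> L" using lim itb by (intro LIMSEQ_le_const) auto
  have "L = es"
  proof (rule ccontr)
    assume "L \<noteq> es"
    then have Llt: "L < es" using Les by simp
    have Q1L: "Q1 L \<noteq> 0" using Q1neg[OF L0 Llt] by simp
    have cF: "isCont F L" unfolding F_def using contQ contQ1 Q1L by (intro continuous_intros) auto
    have l1: "(\<lambda>k. F (it k)) \<longlonglongrightarrow> F L" by (rule isCont_tendsto_compose[OF cF lim])
    have l2: "(\<lambda>k. F (it k)) \<longlonglongrightarrow> L" using LIMSEQ_Suc[OF lim] unfolding it_def itS .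
    have "F L = L" using LIMSEQ_unique[OF l1 l2] .
    then have "Q L = 0" unfolding F_def using Q1L by simp
    then show False using Qpos[OF L0 Llt] by simp
  qed
  then have "newton_iter Q 0 \<longlonglongrightarrow> es" using lim unfolding it_def by simp
  then show ?thesis using es0 Qes decr convex by simp
qed



lemma zero_case:
  fixes Q :: "real \<Rightarrow> real"
  assumes Q0: "Q 0 = 0"
  defines "es \<equiv> Inf {e. e \<ge> 0 \<and> Q e = 0}"
  shows "es \<ge> 0 \<and> Q es = 0 \<and> (\<forall>a b. 0 \<le> a \<and> a < b \<and> b \<le> es \<longrightarrow> Q b < Q a)
    \<and> convex_on {0..es} Q \<and> (newton_iter Q 0 \<longlonglongrightarrow> es)"
proof -
  have es: "es = 0" unfolding es_def by (rule cInf_eq_minimum) (use Q0 in auto)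
  have it: "newton_iter Q 0 k = 0" for k by (induction k) (auto simp: Q0)
  have cv: "convex_on {0..0} Q" by (simp add: convex_on_def Q0)
  have "newton_iter Q 0 = (\<lambda>k. 0)" using it by auto
  then show ?thesis using es cv Q0 by simp
qed

theorem theorem1:
  fixes n :: nat and x y :: "nat \<Rightarrow> real"
  defines "Q \<equiv> pratt_Q4 n x y" and "\<eta>s \<equiv> pratt_eta_star n x y"
  shows "\<eta>s \<ge> 0 \<and> Q \<eta>s = 0
    \<and> (\<forall>a b. 0 \<le> a \<and> a < b \<and> b \<le> \<eta>s \<longrightarrow> Q b < Q a)
    \<and> convex_on {0..\<eta>s} Q
    \<and> (newton_iter Q 0 \<longlonglongrightarrow> \<eta>s)"
proof -
  define z where "z = (\<lambda>i. (x i)\<^sup>2 + (y i)\<^sup>2)"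
  define Mzz where "Mzz = (\<Sum>i<n. z i * z i)"
  define Mxz where "Mxz = (\<Sum>i<n. x i * z i)"
  define Myz where "Myz = (\<Sum>i<n. y i * z i)"
  define Mz where "Mz = (\<Sum>i<n. z i)"
  define Mxx where "Mxx = (\<Sum>i<n. x i * x i)"
  define Mxy where "Mxy = (\<Sum>i<n. x i * y i)"
  define Myy where "Myy = (\<Sum>i<n. y i * y i)"
  define Mx where "Mx = (\<Sum>i<n. x i)"
  define My where "My = (\<Sum>i<n. y i)"
  define N where "N = real n"
  have Qf: "Q e = det4f Mzz Mxz Myz (Mz + 2*e) Mxz (Mxx - e) Mxy Mx Myz Mxy (Myy - e) My (Mz + 2*e) Mx My N" for e
    unfolding Q_def Q4_formula Mzz_def Mxz_def Myz_def Mz_def Mxx_def Mxy_def Myy_def Mx_def My_def N_def z_def ..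
  have esd: "\<eta>s = Inf {e. e \<ge> 0 \<and> Q e = 0}" unfolding \<eta>s_def pratt_eta_star_def Q_def ..
  show ?thesis
  proof (cases "n = 0")
    case True
    then have "Q 0 = 0" unfolding Qf Mzz_def Mxz_def Myz_def Mz_def Mxx_def Mxy_def Myy_def Mx_def My_def N_def
      by (simp add: det4f_def)
    then show ?thesis unfolding esd by (rule zero_case)
  next
    case False
    then have N0: "N > 0" unfolding N_def by simp
    define xb where "xb = Mx / N"
    define yb where "yb = My / N"
    define c where "c = xb^2 + yb^2"
    define xt where "xt i = x i - xb" for i
    define yt where "yt i = y i - yb" for i
    define zt where "zt i = xt i * xt i + yt i * yt i" for i
    define p where "p = (\<Sum>i<n. xt i * xt i)"
    define q where "q = (\<Sum>i<n. yt i * yt i)"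
    define r where "r = (\<Sum>i<n. xt i * yt i)"
    define u1 where "u1 = (\<Sum>i<n. xt i * zt i)"
    define u2 where "u2 = (\<Sum>i<n. yt i * zt i)"
    define aa where "aa = (\<Sum>i<n. zt i * zt i)"
    have xe: "x i = xt i + xb" for i unfolding xt_def by simp
    have ye: "y i = yt i + yb" for i unfolding yt_def by simp
    have ze: "z i = zt i + (2*xb) * xt i + (2*yb) * yt i + c" for i
      unfolding z_def zt_def xt_def yt_def c_def by (simp add: algebra_simps power2_eq_square)
    have cardn: "(\<Sum>i<n. k) = N * k" for k :: real unfolding N_def by simp
    have sxt: "(\<Sum>i<n. xt i) = 0"
      unfolding xt_def xb_def using N0 by (simp add: sum_subtractf cardn Mx_def N_def)
    have syt: "(\<Sum>i<n. yt i) = 0"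
      unfolding yt_def yb_def using N0 by (simp add: sum_subtractf cardn My_def N_def)
    have szt: "(\<Sum>i<n. zt i) = p + q"
      unfolding zt_def p_def q_def by (simp add: sum.distrib)
    have fMx: "Mx = N*xb" unfolding xb_def using N0 by simp
    have fMy: "My = N*yb" unfolding yb_def using N0 by simp
    have fMxx: "Mxx = p + N*xb^2"
    proof -
      have "Mxx = (\<Sum>i<n. xt i * xt i + (2*xb) * xt i + xb^2)"
        unfolding Mxx_def xe by (rule sum.cong) (simp_all add: algebra_simps power2_eq_square)
      also have "\<dots> = p + N*xb^2"
        by (simp only: sum.distrib sum_distrib_left[symmetric] sxt cardn p_def, (simp add: algebra_simps)?)
      finally show ?thesis .
    qed
    have fMyy: "Myy = q + N*yb^2"
    proof -
      have "Myy = (\<Sum>i<n. yt i * yt i + (2*yb) * yt i + yb^2)"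
        unfolding Myy_def ye by (rule sum.cong) (simp_all add: algebra_simps power2_eq_square)
      also have "\<dots> = q + N*yb^2"
        by (simp only: sum.distrib sum_distrib_left[symmetric] syt cardn q_def, (simp add: algebra_simps)?)
      finally show ?thesis .
    qed
    have fMxy: "Mxy = r + N*xb*yb"
    proof -
      have "Mxy = (\<Sum>i<n. xt i * yt i + yb * xt i + xb * yt i + xb*yb)"
        unfolding Mxy_def xe ye by (rule sum.cong) (simp_all add: algebra_simps)
      also have "\<dots> = r + N*xb*yb"
        by (simp only: sum.distrib sum_distrib_left[symmetric] sxt syt cardn r_def, (simp add: algebra_simps)?)
      finally show ?thesis .
    qed
    have fMz: "Mz = (p+q) + N*(xb^2+yb^2)"
    proof -
      have "Mz = (\<Sum>i<n. zt i + (2*xb) * xt i + (2*yb) * yt i + c)"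
        unfolding Mz_def ze ..
      also have "\<dots> = (p+q) + N*(xb^2+yb^2)"
        by (simp only: sum.distrib sum_distrib_left[symmetric] sxt syt szt cardn c_def, (simp add: algebra_simps)?)
      finally show ?thesis .
    qed
    have fMxz: "Mxz = u1 + 2*xb*p + 2*yb*r + xb*(p+q) + N*xb*(xb^2+yb^2)"
    proof -
      have "Mxz = (\<Sum>i<n. xt i * zt i + (2*xb) * (xt i * xt i) + (2*yb) * (xt i * yt i) + c * xt i
          + xb * zt i + (2*xb*xb) * xt i + (2*xb*yb) * yt i + xb * c)"
        unfolding Mxz_def xe ze by (rule sum.cong) (simp_all add: algebra_simps)
      also have "\<dots> = u1 + 2*xb*p + 2*yb*r + xb*(p+q) + N*xb*(xb^2+yb^2)"
        by (simp only: sum.distrib sum_distrib_left[symmetric] sxt syt szt cardn u1_def p_def r_def c_def, (simp add: algebra_simps)?)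
      finally show ?thesis .
    qed
    have fMyz: "Myz = u2 + 2*yb*q + 2*xb*r + yb*(p+q) + N*yb*(xb^2+yb^2)"
    proof -
      have "Myz = (\<Sum>i<n. yt i * zt i + (2*yb) * (yt i * yt i) + (2*xb) * (xt i * yt i) + c * yt i
          + yb * zt i + (2*yb*xb) * xt i + (2*yb*yb) * yt i + yb * c)"
        unfolding Myz_def ye ze by (rule sum.cong) (simp_all add: algebra_simps)
      also have "\<dots> = u2 + 2*yb*q + 2*xb*r + yb*(p+q) + N*yb*(xb^2+yb^2)"
        by (simp only: sum.distrib sum_distrib_left[symmetric] sxt syt szt cardn u2_def q_def r_def c_def, (simp add: algebra_simps)?)
      finally show ?thesis .
    qed
    have fMzz: "Mzz = aa + 4*xb^2*p + 4*yb^2*q + N*(xb^2+yb^2)^2 + 4*xb*u1 + 4*yb*u2 + 2*(xb^2+yb^2)*(p+q) + 8*xb*yb*r"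
    proof -
      have "Mzz = (\<Sum>i<n. zt i * zt i + (4*xb^2) * (xt i * xt i) + (4*yb^2) * (yt i * yt i) + c^2
          + (4*xb) * (xt i * zt i) + (4*yb) * (yt i * zt i) + (2*c) * zt i + (8*xb*yb) * (xt i * yt i)
          + (4*xb*c) * xt i + (4*yb*c) * yt i)"
        unfolding Mzz_def ze by (rule sum.cong) (simp_all add: algebra_simps power2_eq_square)
      also have "\<dots> = aa + 4*xb^2*p + 4*yb^2*q + N*(xb^2+yb^2)^2 + 4*xb*u1 + 4*yb*u2 + 2*(xb^2+yb^2)*(p+q) + 8*xb*yb*r"
        by (simp only: sum.distrib sum_distrib_left[symmetric] sxt syt szt cardn aa_def u1_def u2_def p_def q_def r_def c_def, (simp add: algebra_simps)?)
      finally show ?thesis .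
    qed
    have Qc: "Q e = (N*aa - ((p+q)+2*e)^2)*((p-e)*(q-e) - r^2) - N*(u1^2*(q-e) - 2*u1*u2*r + u2^2*(p-e))" for e
      unfolding Qf by (rule key_identity[OF fMx fMy fMxx fMyy fMxy fMz fMxz fMyz fMzz])
    have p0: "p \<ge> 0" unfolding p_def by (simp add: sum_nonneg)
    have q0: "q \<ge> 0" unfolding q_def by (simp add: sum_nonneg)
    have pqr: "r^2 \<le> p*q" unfolding p_def q_def r_def
      using Cauchy_Schwarz_ineq_sum[of xt yt "{..<n}"] by (simp add: power2_eq_square)
    have Q0nn: "Q 0 \<ge> 0"
    proof -
      define s where "s = p + q"
      define Z where "Z i = zt i - s / N" for i
      have ZZ: "(\<Sum>i<n. Z i ^ 2) = aa - s^2/N"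
      proof -
        have "(\<Sum>i<n. Z i ^ 2) = (\<Sum>i<n. zt i * zt i + (- 2 * (s/N)) * zt i + (s/N)^2)"
          unfolding Z_def by (rule sum.cong) (simp_all add: algebra_simps power2_eq_square)
        also have "\<dots> = aa - 2*(s/N) * s + N*(s/N)^2"
          by (simp only: sum.distrib sum_distrib_left[symmetric] szt cardn aa_def s_def, (simp add: algebra_simps)?)
        also have "\<dots> = aa - s^2/N" using N0 by (simp add: field_simps power2_eq_square)
        finally show ?thesis .
      qed
      have Zx: "(\<Sum>i<n. Z i * xt i) = u1"
      proof -
        have "(\<Sum>i<n. Z i * xt i) = (\<Sum>i<n. xt i * zt i + (- (s/N)) * xt i)"
          unfolding Z_def by (rule sum.cong) (simp_all add: algebra_simps)
        also have "\<dots> = u1" by (simp only: sum.distrib sum_distrib_left[symmetric] sxt u1_def, (simp add: algebra_simps)?)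
        finally show ?thesis .
      qed
      have Zy: "(\<Sum>i<n. Z i * yt i) = u2"
      proof -
        have "(\<Sum>i<n. Z i * yt i) = (\<Sum>i<n. yt i * zt i + (- (s/N)) * yt i)"
          unfolding Z_def by (rule sum.cong) (simp_all add: algebra_simps)
        also have "\<dots> = u2" by (simp only: sum.distrib sum_distrib_left[symmetric] syt u2_def, (simp add: algebra_simps)?)
        finally show ?thesis .
      qed
      have g: "(aa - s^2/N)*(p*q - r^2) - u1*(u1*q - r*u2) + u2*(u1*r - p*u2) \<ge> 0"
        using gram3[of "{..<n}" Z xt yt] ZZ Zx Zy
        unfolding p_def q_def r_def by (simp add: power2_eq_square)
      have "Q 0 = N * ((aa - s^2/N)*(p*q - r^2) - u1*(u1*q - r*u2) + u2*(u1*r - p*u2))"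
        unfolding Qc s_def using N0 by (simp add: field_simps power2_eq_square)
      then show ?thesis using g N0 by simp
    qed
    show ?thesis
    proof (cases "Q 0 = 0")
      case True
      then show ?thesis unfolding esd by (rule zero_case)
    next
      case False
      then have "Q 0 > 0" using Q0nn by simp
      then show ?thesis unfolding esd by (rule abstract_main[OF Qc N0 p0 q0 pqr])
    qed
  qed
qed

end
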